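(* Let $(\mathfrak{A},\varphi,\tau)$ be a $*$-dynamical system and let $\mathfrak{T}$ be any $\varphi$-total set in $\mathfrak{A}$. Then: (i) If $(\mathfrak{A},\varphi,\tau)$ is ergodic, then $\left\|\frac1n\sum_{k=0}^{n-1}\tau^k(A)-\varphi(A)\right\|_\varphi\to0$ as $n\to\infty$ for every $A\in\mathfrak{A}$. (ii) If $\left\|\frac1n\sum_{k=0}^{n-1}\tau^k(A)-\varphi(A)\right\|_\varphi\to0$ as $n\to\infty$ for every $A\in\mathfrak{T}$, then $(\mathfrak{A},\varphi,\tau)$ is ergodic.
   Context: All algebras are over $\mathbb{C}$. A state on a unital $*$-algebra $\mathfrak{A}$ is a linear functional $\varphi$ with $\varphi(A^*A)\ge0$ for all $A$ and $\varphi(1)=1$. A $*$-dynamical system is a triple $(\mathfrak{A},\varphi,\tau)$ with $\mathfrak{A}$ a unital $*$-algebra, $\varphi$ a state, and $\tau:\mathfrak{A}\to\mathfrak{A}$ linear with $\tau(1)=1$ and $\varphi(\tau(A)^*\tau(A))\le\varphi(A^*A)$ for all $A$. Let $\|A\|_\varphi=\sqrt{\varphi(A^*A)}$ and identify $\alpha\in\mathbb{C}$ with $\alpha1$. The system is ergodic if for every sequence $(A_n)$ with $\|\tau(A_n)-A_n\|_\varphi\to0$ which is Cauchy for $\|\cdot\|_\varphi$ (for every $\varepsilon>0$ there is $N$ with $\|A_m-A_n\|_\varphi\le\varepsilon$ for $m,n>N$), there is $\alpha\in\mathbb{C}$ with $\|A_n-\alpha\|_\varphi\to0$. A subset of $\mathfrak{A}$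 is $\varphi$-total if its linear span is dense in the seminormed space $(\mathfrak{A},\|\cdot\|_\varphi)$. *)

theory Defs
  imports Complex_Main
begin

definition star_algebra :: "(complex \<Rightarrow> 'a::ring_1 \<Rightarrow> 'a) \<Rightarrow> ('a \<Rightarrow> 'a) \<Rightarrow> bool" where
  "star_algebra sm st \<longleftrightarrow>
     vector_space sm \<and>
     (\<forall>c x y. sm c (x * y) = sm c x * y) \<and>
     (\<forall>c x y. sm c (x * y) = x * sm c y) \<and>
     (\<forall>x y. st (x + y) = st x + st y) \<and>
     (\<forall>c x. st (sm c x) = sm (cnj c) (st x)) \<and>
     (\<forall>x y. st (x * y) = st y * st x) \<and>
     (\<forall>x. st (st x) = x)"

definition is_state :: "(complex \<Rightarrow> 'a::ring_1 \<Rightarrow> 'a) \<Rightarrow> ('a \<Rightarrow> 'a) \<Rightarrow> ('a \<Rightarrow> complex) \<Rightarrow> bool" where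
  "is_state sm st \<phi> \<longleftrightarrow>
     Vector_Spaces.linear sm (*) \<phi> \<and>
     (\<forall>A. Im (\<phi> (st A * A)) = 0 \<and> Re (\<phi> (st A * A)) \<ge> 0) \<and>
     \<phi> 1 = 1"

definition phi_norm :: "('a \<Rightarrow> 'a) \<Rightarrow> ('a \<Rightarrow> complex) \<Rightarrow> 'a::ring_1 \<Rightarrow> real" where
  "phi_norm st \<phi> A = sqrt (Re (\<phi> (st A * A)))"

definition star_dynamical_system ::
  "(complex \<Rightarrow> 'a::ring_1 \<Rightarrow> 'a) \<Rightarrow> ('a \<Rightarrow> 'a) \<Rightarrow> ('a \<Rightarrow> complex) \<Rightarrow> ('a \<Rightarrow> 'a) \<Rightarrow> bool" where
  "star_dynamical_system sm st \<phi> \<tau> \<longleftrightarrow>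
     star_algebra sm st \<and> is_state sm st \<phi> \<and>
     Vector_Spaces.linear sm sm \<tau> \<and> \<tau> 1 = 1 \<and>
     (\<forall>A. Re (\<phi> (st (\<tau> A) * \<tau> A)) \<le> Re (\<phi> (st A * A)))"

definition ergodic ::
  "(complex \<Rightarrow> 'a::ring_1 \<Rightarrow> 'a) \<Rightarrow> ('a \<Rightarrow> 'a) \<Rightarrow> ('a \<Rightarrow> complex) \<Rightarrow> ('a \<Rightarrow> 'a) \<Rightarrow> bool" where
  "ergodic sm st \<phi> \<tau> \<longleftrightarrow>
     (\<forall>An :: nat \<Rightarrow> 'a.
        (\<lambda>n. phi_norm st \<phi> (\<tau> (An n) - An n)) \<longlonglongrightarrow> 0 \<longrightarrow>
        (\<forall>\<epsilon>>0. \<exists>N. \<forall>m>N. \<forall>n>N. phi_norm st \<phi> (An m - An n) \<le> \<epsilon>) \<longrightarrow>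
        (\<exists>\<alpha>. (\<lambda>n. phi_norm st \<phi> (An n - sm \<alpha> 1)) \<longlonglongrightarrow> 0))"

definition phi_total ::
  "(complex \<Rightarrow> 'a::ring_1 \<Rightarrow> 'a) \<Rightarrow> ('a \<Rightarrow> 'a) \<Rightarrow> ('a \<Rightarrow> complex) \<Rightarrow> 'a set \<Rightarrow> bool" where
  "phi_total sm st \<phi> T \<longleftrightarrow>
     (\<forall>A. \<forall>\<epsilon>>0. \<exists>B \<in> module.span sm T. phi_norm st \<phi> (A - B) < \<epsilon>)"

definition avg_dev ::
  "(complex \<Rightarrow> 'a::ring_1 \<Rightarrow> 'a) \<Rightarrow> ('a \<Rightarrow> complex) \<Rightarrow> ('a \<Rightarrow> 'a) \<Rightarrow> 'a \<Rightarrow> nat \<Rightarrow> 'a" where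
  "avg_dev sm \<phi> \<tau> A n = sm (1 / of_nat n) (\<Sum>k<n. (\<tau> ^^ k) A) - sm (\<phi> A) 1"

end

theory Submission
  imports Defs
begin

locale sds =
  fixes sm :: "complex \<Rightarrow> 'a::ring_1 \<Rightarrow> 'a" and st :: "'a \<Rightarrow> 'a"
    and \<phi> :: "'a \<Rightarrow> complex" and \<tau> :: "'a \<Rightarrow> 'a"
  assumes sds: "star_dynamical_system sm st \<phi> \<tau>"
begin

lemma vs: "vector_space sm"
  using sds unfolding star_dynamical_system_def star_algebra_def by auto

sublocale vector_space sm by (rule vs)

lemma sm_mult_left: "sm c (x * y) = sm c x * y"
  and sm_mult_right: "sm c (x * y) = x * sm c y"
  and st_add: "st (x + y) = st x + st y"
  and st_sm: "st (sm c x) = sm (cnj c) (st x)"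
  and st_mult: "st (x * y) = st y * st x"
  and st_st: "st (st x) = x"
  using sds unfolding star_dynamical_system_def star_algebra_def by auto

lemma phi_add: "\<phi> (x + y) = \<phi> x + \<phi> y"
  and phi_sm: "\<phi> (sm c x) = c * \<phi> x"
  and phi_pos: "Im (\<phi> (st A * A)) = 0" "Re (\<phi> (st A * A)) \<ge> 0"
  and phi_one: "\<phi> 1 = 1"
  using sds unfolding star_dynamical_system_def is_state_def by (auto simp: Vector_Spaces.linear_iff)

lemma tau_add: "\<tau> (x + y) = \<tau> x + \<tau> y"
  and tau_sm: "\<tau> (sm c x) = sm c (\<tau> x)"
  and tau_one: "\<tau> 1 = 1"
  and tau_contr: "Re (\<phi> (st (\<tau> A) * \<tau> A)) \<le> Re (\<phi> (st A * A))"
  using sds unfolding star_dynamical_system_def by (auto simp: Vector_Spaces.linear_iff)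

lemma st_zero: "st 0 = 0" using st_add[of 0 0] by simp
lemma st_minus: "st (- x) = - st x"
  using st_add[of x "-x"] st_zero minus_unique[of "st x" "st (-x)"] by simp
lemma st_diff: "st (x - y) = st x - st y"
  using st_add[of x "-y"] st_minus by simp
lemma st_one: "st 1 = 1"
  using st_mult[of "st 1" 1] st_st[of 1] by simp

lemma phi_zero: "\<phi> 0 = 0" using phi_add[of 0 0] by simp
lemma phi_minus: "\<phi> (- x) = - \<phi> x"
  using phi_add[of x "-x"] phi_zero minus_unique[of "\<phi> x" "\<phi> (-x)"] by simp
lemma phi_diff: "\<phi> (x - y) = \<phi> x - \<phi> y"
  using phi_add[of x "-y"] phi_minus by simp
lemma phi_sum: "\<phi> (sum f S) = (\<Sum>k\<in>S. \<phi> (f k))"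
  by (induct S rule: infinite_finite_induct) (auto simp: phi_zero phi_add)

lemma tau_zero: "\<tau> 0 = 0" using tau_add[of 0 0] by simp
lemma tau_minus: "\<tau> (- x) = - \<tau> x"
  using tau_add[of x "-x"] tau_zero minus_unique[of "\<tau> x" "\<tau> (-x)"] by simp
lemma tau_diff: "\<tau> (x - y) = \<tau> x - \<tau> y"
  using tau_add[of x "-y"] tau_minus by simp
lemma tau_sum: "\<tau> (sum f S) = (\<Sum>k\<in>S. \<tau> (f k))"
  by (induct S rule: infinite_finite_induct) (auto simp: tau_zero tau_add)

lemma taup_add: "(\<tau>^^k) (x + y) = (\<tau>^^k) x + (\<tau>^^k) y"
  by (induct k) (auto simp: tau_add)
lemma taup_sm: "(\<tau>^^k) (sm c x) = sm c ((\<tau>^^k) x)"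
  by (induct k) (auto simp: tau_sm)
lemma taup_diff: "(\<tau>^^k) (x - y) = (\<tau>^^k) x - (\<tau>^^k) y"
  by (induct k) (auto simp: tau_diff)
lemma taup_sum: "(\<tau>^^k) (sum f S) = (\<Sum>j\<in>S. (\<tau>^^k) (f j))"
  by (induct k) (auto simp: tau_sum)

definition ip where "ip A B = \<phi> (st A * B)"
definition nsq where "nsq A = Re (ip A A)"
abbreviation N where "N \<equiv> phi_norm st \<phi>"

lemma N_def: "N A = sqrt (nsq A)" by (simp add: phi_norm_def nsq_def ip_def)
lemma nsq_nonneg: "nsq A \<ge> 0" using phi_pos(2)[of A] by (simp add: nsq_def ip_def)
lemma ip_self: "ip A A = complex_of_real (nsq A)"
  using phi_pos[of A] by (simp add: nsq_def ip_def complex_eq_iff)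
lemma N_nonneg: "N A \<ge> 0" by (simp add: N_def nsq_nonneg)
lemma N_sq: "(N A)^2 = nsq A" by (simp add: N_def nsq_nonneg)

lemma ip_add_right: "ip A (B + C) = ip A B + ip A C"
  by (simp add: ip_def distrib_left phi_add)
lemma ip_add_left: "ip (A + B) C = ip A C + ip B C"
  by (simp add: ip_def distrib_right phi_add st_add)
lemma ip_sm_right: "ip A (sm c B) = c * ip A B"
  by (simp add: ip_def sm_mult_right[symmetric] phi_sm)
lemma ip_sm_left: "ip (sm c A) B = cnj c * ip A B"
  by (simp add: ip_def st_sm sm_mult_left[symmetric] phi_sm)
lemma ip_diff_right: "ip A (B - C) = ip A B - ip A C"
  by (simp add: ip_def right_diff_distrib phi_diff)
lemma ip_diff_left: "ip (A - B) C = ip A C - ip B C"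
  by (simp add: ip_def left_diff_distrib phi_diff st_diff)

lemma ip_herm: "ip B A = cnj (ip A B)"
proof -
  have r1: "Im (ip (A + B) (A + B)) = 0" by (simp add: ip_self)
  have r2: "Im (ip (A + sm \<i> B) (A + sm \<i> B)) = 0" by (simp add: ip_self)
  have e1: "ip (A + B) (A + B) = ip A A + ip A B + ip B A + ip B B"
    by (simp add: ip_add_left ip_add_right)
  have e2: "ip (A + sm \<i> B) (A + sm \<i> B) = ip A A + \<i> * ip A B - \<i> * ip B A + ip B B"
    by (simp add: ip_add_left ip_add_right ip_sm_left ip_sm_right right_diff_distrib mult.assoc[symmetric])
  have "Im (ip A A) = 0" "Im (ip B B) = 0" by (simp_all add: ip_self)
  then show ?thesis using r1 r2 e1 e2 by (simp add: complex_eq_iff)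
qed

lemma phi_ip: "\<phi> B = ip 1 B" by (simp add: ip_def st_one)

lemma nsq_add: "nsq (A + B) = nsq A + nsq B + 2 * Re (ip A B)"
proof -
  have "ip (A + B) (A + B) = ip A A + ip A B + ip B A + ip B B"
    by (simp add: ip_add_left ip_add_right)
  then show ?thesis using ip_herm[of A B] by (simp add: nsq_def)
qed
lemma nsq_diff: "nsq (A - B) = nsq A + nsq B - 2 * Re (ip A B)"
proof -
  have "ip (A - B) (A - B) = ip A A - ip A B - ip B A + ip B B"
    by (simp add: ip_diff_left ip_diff_right)
  then show ?thesis using ip_herm[of A B] by (simp add: nsq_def)
qed
lemma nsq_sm: "nsq (sm c A) = (cmod c)^2 * nsq A"
proof -
  have "ip (sm c A) (sm c A) = (cnj c * c) * ip A A" by (simp add: ip_sm_left ip_sm_right)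
  also have "cnj c * c = of_real ((cmod c)^2)" by (subst complex_norm_square) (rule mult.commute)
  finally show ?thesis by (simp add: nsq_def)
qed
lemma N_sm: "N (sm c A) = cmod c * N A"
  by (simp add: N_def nsq_sm real_sqrt_mult)

lemma re_ip_le: "Re (ip A B) \<le> N A * N B"
proof -
  define a b r where "a = nsq A" and "b = nsq B" and "r = Re (ip A B)"
  have q: "0 \<le> a - 2 * t * r + t^2 * b" for t :: real
  proof -
    have "nsq (A - sm (of_real t) B) = a + t^2 * b - 2 * t * r"
      by (simp add: nsq_diff nsq_sm ip_sm_right a_def b_def r_def)
    then show ?thesis using nsq_nonneg[of "A - sm (of_real t) B"] by simp
  qed
  have a0: "a \<ge> 0" "b \<ge> 0" by (simp_all add: a_def b_def nsq_nonneg)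
  show ?thesis
  proof (cases "b = 0")
    case True
    have "r \<le> 0"
    proof (rule ccontr)
      assume "\<not> r \<le> 0"
      then have "r > 0" by simp
      have "0 \<le> a - 2 * ((a+1)/(2*r)) * r" using q[of "(a+1)/(2*r)"] True by simp
      also have "\<dots> = -1" using \<open>r>0\<close> by (simp add: field_simps)
      finally show False by simp
    qed
    moreover have "0 \<le> N A * N B" by (simp add: N_nonneg)
    ultimately show ?thesis unfolding r_def by linarith
  next
    case False
    then have bp: "b > 0" using a0 by simp
    have "0 \<le> a - 2 * (r/b) * r + (r/b)^2 * b" by (rule q)
    also have "\<dots> = a - r^2 / b" using bp by (simp add: field_simps power2_eq_square)
    finally have "r^2 \<le> a * b" using bp by (simp add: field_simps)
    then have "r \<le> sqrt (a*b)" using real_le_rsqrt by blast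
    then show ?thesis by (simp add: N_def a_def b_def r_def real_sqrt_mult)
  qed
qed


lemma cmod_ip_le: "cmod (ip A B) \<le> N A * N B"
proof (cases "ip A B = 0")
  case True then show ?thesis by (simp add: N_nonneg)
next
  case False
  define z where "z = ip A B"
  define u where "u = cnj z / complex_of_real (cmod z)"
  have zn: "cmod z > 0" using False z_def by simp
  have cu: "cmod u = 1" using zn by (simp add: u_def norm_divide)
  have cz: "cnj z * z = complex_of_real ((cmod z)^2)" by (subst complex_norm_square) (rule mult.commute)
  have "u * z = complex_of_real ((cmod z)^2) / complex_of_real (cmod z)"
    by (simp only: u_def cz[symmetric]) (simp add: field_simps)
  also have "\<dots> = complex_of_real (cmod z)" using zn by (simp add: power2_eq_square)
  finally have uz: "u * z = complex_of_real (cmod z)" .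
  have "Re (ip A (sm u B)) \<le> N A * N (sm u B)" by (rule re_ip_le)
  then show ?thesis by (simp add: ip_sm_right z_def[symmetric] uz N_sm cu)
qed

lemma N_add: "N (A + B) \<le> N A + N B"
proof (rule power2_le_imp_le)
  have "Re (ip A B) \<le> N A * N B" by (rule re_ip_le)
  then show "(N (A + B))^2 \<le> (N A + N B)^2"
    by (simp add: N_sq nsq_add power2_sum N_sq)
  show "0 \<le> N A + N B" by (simp add: N_nonneg)
qed

lemma N_minus: "N (- A) = N A"
  using N_sm[of "-1" A] by simp

lemma N_diff: "N (A - B) \<le> N A + N B"
  using N_add[of A "-B"] N_minus[of B] by simp

lemma N_commute: "N (A - B) = N (B - A)"
  using N_minus[of "A - B"] by simp

lemma N_tri: "N (A - C) \<le> N (A - B) + N (B - C)"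
  using N_add[of "A - B" "B - C"] by simp

lemma nsq_zero: "nsq 0 = 0" by (simp add: nsq_def ip_def phi_zero)
lemma N_zero: "N 0 = 0" by (simp add: N_def nsq_zero)

lemma N_sum: "N (sum f S) \<le> (\<Sum>k\<in>S. N (f k))"
proof (induct S rule: infinite_finite_induct)
  case (insert x F)
  then show ?case using N_add[of "f x" "sum f F"] by simp
qed (auto simp: N_zero)

lemma nsq_one: "nsq 1 = 1" by (simp add: nsq_def ip_def st_one phi_one)
lemma N_one: "N 1 = 1" by (simp add: N_def nsq_one)
lemma N_sm1: "N (sm c 1) = cmod c" by (simp add: N_sm N_one)
lemma cmod_phi: "cmod (\<phi> B) \<le> N B"
  using cmod_ip_le[of 1 B] by (simp add: phi_ip N_one)

lemma N_tau: "N (\<tau> A) \<le> N A"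
  using tau_contr[of A] by (simp add: N_def nsq_def ip_def)
lemma N_taup: "N ((\<tau>^^k) A) \<le> N A"
  by (induct k) (auto intro: order_trans[OF N_tau])

lemma ip_one_right: "ip B 1 = cnj (\<phi> B)"
  by (simp add: ip_herm[of 1 B] phi_ip)

lemma nsq_plus_const: "nsq (B + sm t 1) = nsq B + (cmod t)^2 + 2 * Re (t * cnj (\<phi> B))"
  by (simp add: nsq_add nsq_sm nsq_one ip_sm_right ip_one_right)

lemma phi_tau: "\<phi> (\<tau> A) = \<phi> A"
proof (rule ccontr)
  assume ne: "\<phi> (\<tau> A) \<noteq> \<phi> A"
  define d where "d = \<phi> (\<tau> A) - \<phi> A"
  have dn: "cmod d > 0" using ne d_def by simp
  define s where "s = (nsq A + 1) / (2 * (cmod d)^2)"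
  define t where "t = complex_of_real s * d"
  have "\<tau> (A + sm t 1) = \<tau> A + sm t 1" by (simp add: tau_add tau_sm tau_one)
  then have "nsq (\<tau> A + sm t 1) \<le> nsq (A + sm t 1)"
    using tau_contr[of "A + sm t 1"] by (simp add: nsq_def ip_def)
  then have "nsq (\<tau> A) + 2 * Re (t * cnj (\<phi> (\<tau> A))) \<le> nsq A + 2 * Re (t * cnj (\<phi> A))"
    by (simp add: nsq_plus_const)
  moreover have "Re (t * cnj (\<phi> (\<tau> A))) = Re (t * cnj (\<phi> A)) + Re (t * cnj d)"
    by (simp add: d_def algebra_simps)
  moreover have "t * cnj d = complex_of_real (s * (cmod d)^2)"
  proof -
    have "d * cnj d = complex_of_real ((cmod d)^2)" by (rule complex_norm_square[symmetric])
    then show ?thesis by (simp only: t_def mult.assoc of_real_mult)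
  qed
  moreover have "2 * (s * (cmod d)^2) = nsq A + 1"
    using dn by (simp add: s_def)
  ultimately show False using nsq_nonneg[of "\<tau> A"] by simp
qed

lemma phi_taup: "\<phi> ((\<tau>^^k) A) = \<phi> A"
  by (induct k) (auto simp: phi_tau)

definition M where "M n A = sm (1 / of_nat n) (\<Sum>k<n. (\<tau>^^k) A)"

lemma avg_M: "avg_dev sm \<phi> \<tau> A n = M n A - sm (\<phi> A) 1"
  by (simp add: avg_dev_def M_def)

lemma M_add: "M n (A + B) = M n A + M n B"
  by (simp add: M_def taup_add sum.distrib scale_right_distrib)
lemma M_sm: "M n (sm c A) = sm c (M n A)"
  by (simp add: M_def taup_sm scale_sum_right[symmetric] mult.commute)
lemma M_diff: "M n (A - B) = M n A - M n B"
  by (simp add: M_def taup_diff sum_subtractf scale_right_diff_distrib)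
lemma M_tau: "\<tau> (M n A) = M n (\<tau> A)"
  by (simp add: M_def tau_sm tau_sum funpow_swap1)

lemma N_M: "N (M n A) \<le> N A"
proof (cases "n = 0")
  case True then show ?thesis by (simp add: M_def N_zero N_nonneg)
next
  case False
  have "N (M n A) = (1 / real n) * N (\<Sum>k<n. (\<tau>^^k) A)"
    by (simp add: M_def N_sm norm_divide)
  also have "\<dots> \<le> (1 / real n) * (\<Sum>k<n. N ((\<tau>^^k) A))"
    by (intro mult_left_mono N_sum) auto
  also have "\<dots> \<le> (1 / real n) * (\<Sum>k<n. N A)"
    by (intro mult_left_mono sum_mono N_taup) auto
  also have "\<dots> = N A" using False by simp
  finally show ?thesis .
qed

lemma M_tau_diff: "M n (\<tau> A) - M n A = sm (1 / of_nat n) ((\<tau>^^n) A - A)"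
proof -
  have "(\<Sum>k<n. (\<tau>^^k) (\<tau> A)) - (\<Sum>k<n. (\<tau>^^k) A) = (\<Sum>k<n. (\<tau>^^Suc k) A - (\<tau>^^k) A)"
    by (simp add: sum_subtractf funpow_swap1)
  also have "\<dots> = (\<tau>^^n) A - A" by (subst sum_lessThan_telescope) simp
  finally show ?thesis by (simp add: M_def scale_right_diff_distrib[symmetric])
qed

lemma N_M_tau_diff: "N (M n (\<tau> A) - M n A) \<le> 2 * N A / real n"
proof -
  have "N (M n (\<tau> A) - M n A) = (1 / real n) * N ((\<tau>^^n) A - A)"
    by (simp add: M_tau_diff N_sm norm_divide)
  also have "\<dots> \<le> (1 / real n) * (N A + N A)"
    by (intro mult_left_mono order_trans[OF N_diff] add_mono N_taup) auto
  finally show ?thesis by simp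
qed

lemma phi_M: "n \<ge> 1 \<Longrightarrow> \<phi> (M n A) = \<phi> A"
  by (simp add: M_def phi_sm phi_sum phi_taup)


lemma lim0_iff: "(\<lambda>n. N (f n)) \<longlonglongrightarrow> 0 \<longleftrightarrow> (\<forall>r>0. \<exists>no. \<forall>n\<ge>no. N (f n) < r)"
  by (simp add: LIMSEQ_iff N_nonneg)

lemma M_zero: "M n 0 = 0" by (simp add: M_def taup_sum[of _ "\<lambda>_. 0" "{}", simplified])

lemma M_sum: "M n (sum f S) = (\<Sum>k\<in>S. M n (f k))"
  by (induct S rule: infinite_finite_induct) (auto simp: M_zero M_add)

lemma avg_add: "avg_dev sm \<phi> \<tau> (A + B) n = avg_dev sm \<phi> \<tau> A n + avg_dev sm \<phi> \<tau> B n"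
  by (simp add: avg_M M_add phi_add scale_left_distrib)
lemma avg_sm: "avg_dev sm \<phi> \<tau> (sm c A) n = sm c (avg_dev sm \<phi> \<tau> A n)"
  by (simp add: avg_M M_sm phi_sm scale_right_diff_distrib)
lemma avg_zero: "avg_dev sm \<phi> \<tau> 0 n = 0"
  by (simp add: avg_M M_zero phi_zero)

lemma N_avg_le: "N (avg_dev sm \<phi> \<tau> A n) \<le> 2 * N A"
proof -
  have "N (avg_dev sm \<phi> \<tau> A n) \<le> N (M n A) + N (sm (\<phi> A) 1)"
    unfolding avg_M by (rule N_diff)
  also have "\<dots> \<le> N A + N A" by (intro add_mono N_M) (simp add: N_sm1 cmod_phi)
  finally show ?thesis by simp
qed

definition conv where "conv A \<longleftrightarrow> (\<lambda>n. N (avg_dev sm \<phi> \<tau> A n)) \<longlonglongrightarrow> 0"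

lemma conv_subspace: "subspace (Collect conv)"
proof (rule subspaceI)
  show "0 \<in> Collect conv" by (simp add: conv_def avg_zero N_zero)
next
  fix A B assume "A \<in> Collect conv" "B \<in> Collect conv"
  then have a: "\<forall>r>0. \<exists>no. \<forall>n\<ge>no. N (avg_dev sm \<phi> \<tau> A n) < r"
    and b: "\<forall>r>0. \<exists>no. \<forall>n\<ge>no. N (avg_dev sm \<phi> \<tau> B n) < r"
    by (simp_all add: conv_def lim0_iff)
  have "\<exists>no. \<forall>n\<ge>no. N (avg_dev sm \<phi> \<tau> (A + B) n) < r" if r: "r > 0" for r
  proof -
    obtain n1 where n1: "\<forall>n\<ge>n1. N (avg_dev sm \<phi> \<tau> A n) < r/2" using a r by (meson half_gt_zero)
    obtain n2 where n2: "\<forall>n\<ge>n2. N (avg_dev sm \<phi> \<tau> B n) < r/2" using b r by (meson half_gt_zero)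
    show ?thesis
    proof (intro exI allI impI)
      fix n assume "max n1 n2 \<le> n"
      then have "N (avg_dev sm \<phi> \<tau> A n) < r/2" "N (avg_dev sm \<phi> \<tau> B n) < r/2" using n1 n2 by auto
      then show "N (avg_dev sm \<phi> \<tau> (A + B) n) < r"
        using N_add[of "avg_dev sm \<phi> \<tau> A n" "avg_dev sm \<phi> \<tau> B n"] by (simp add: avg_add)
    qed
  qed
  then show "A + B \<in> Collect conv" by (simp add: conv_def lim0_iff)
next
  fix c A assume "A \<in> Collect conv"
  then have "(\<lambda>n. cmod c * N (avg_dev sm \<phi> \<tau> A n)) \<longlonglongrightarrow> 0"
    by (simp add: conv_def tendsto_mult_right_zero)
  then show "sm c A \<in> Collect conv" by (simp add: conv_def avg_sm N_sm)
qed

lemma conv_span: "\<forall>A\<in>T. conv A \<Longrightarrow> B \<in> span T \<Longrightarrow> conv B"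
  using span_induct[of B T conv] conv_subspace by auto

lemma conv_all:
  assumes tot: "phi_total sm st \<phi> T" and cT: "\<forall>A\<in>T. conv A"
  shows "conv A"
  unfolding conv_def lim0_iff
proof (intro allI impI)
  fix r :: real assume r: "r > 0"
  obtain B where B: "B \<in> span T" "N (A - B) < r/3"
    using tot r unfolding phi_total_def by (meson zero_less_divide_iff zero_less_numeral)
  have "conv B" using conv_span[OF cT B(1)] .
  then obtain no where no: "\<forall>n\<ge>no. N (avg_dev sm \<phi> \<tau> B n) < r/3"
    using r unfolding conv_def lim0_iff by (meson zero_less_divide_iff zero_less_numeral)
  show "\<exists>no. \<forall>n\<ge>no. N (avg_dev sm \<phi> \<tau> A n) < r"
  proof (intro exI allI impI)
    fix n assume "no \<le> n"
    have "avg_dev sm \<phi> \<tau> A n = avg_dev sm \<phi> \<tau> (A - B) n + avg_dev sm \<phi> \<tau> B n"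
      by (simp add: avg_add[symmetric])
    then have "N (avg_dev sm \<phi> \<tau> A n) \<le> N (avg_dev sm \<phi> \<tau> (A - B) n) + N (avg_dev sm \<phi> \<tau> B n)"
      by (simp add: N_add)
    also have "\<dots> \<le> 2 * N (A - B) + N (avg_dev sm \<phi> \<tau> B n)" using N_avg_le by simp
    also have "\<dots> < r" using B(2) no \<open>no \<le> n\<close> by fastforce
    finally show "N (avg_dev sm \<phi> \<tau> A n) < r" .
  qed
qed

lemma N_taup_diff: "N ((\<tau>^^k) B - B) \<le> real k * N (\<tau> B - B)"
proof (induct k)
  case (Suc k)
  have e: "(\<tau>^^Suc k) B - B = (\<tau>^^k) (\<tau> B - B) + ((\<tau>^^k) B - B)"
    by (simp add: taup_diff funpow_swap1)
  have "N ((\<tau>^^Suc k) B - B) \<le> N ((\<tau>^^k) (\<tau> B - B)) + N ((\<tau>^^k) B - B)"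
    unfolding e by (rule N_add)
  also have "\<dots> \<le> N (\<tau> B - B) + real k * N (\<tau> B - B)"
    by (intro add_mono N_taup Suc)
  finally show ?case by (simp add: algebra_simps)
qed (simp add: N_zero)

lemma N_M_minus: "n \<ge> 1 \<Longrightarrow> N (M n B - B) \<le> real n * N (\<tau> B - B)"
proof -
  assume n: "n \<ge> 1"
  have h1: "(\<Sum>k<n. B) = sm (of_nat n) B" by (simp only: sum_constant_scale card_lessThan)
  have h2: "(1 / of_nat n) * of_nat n = (1::complex)" using n by simp
  have "sm (1 / of_nat n) (\<Sum>k<n. B) = sm ((1 / of_nat n) * of_nat n) B"
    unfolding h1 by (rule scale_scale)
  also have "\<dots> = B" unfolding h2 by (rule scale_one)
  finally have hB: "sm (1 / of_nat n) (\<Sum>k<n. B) = B" .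
  have "M n B - B = sm (1 / of_nat n) (\<Sum>k<n. (\<tau>^^k) B) - sm (1 / of_nat n) (\<Sum>k<n. B)"
    unfolding hB M_def ..
  also have "\<dots> = sm (1 / of_nat n) (\<Sum>k<n. (\<tau>^^k) B - B)"
    by (simp only: scale_right_diff_distrib[symmetric] sum_subtractf)
  finally have e: "M n B - B = sm (1 / of_nat n) (\<Sum>k<n. (\<tau>^^k) B - B)" .
  have "N (M n B - B) = (1 / real n) * N (\<Sum>k<n. (\<tau>^^k) B - B)" unfolding e
    by (simp add: N_sm norm_divide)
  also have "\<dots> \<le> (1 / real n) * (\<Sum>k<n. N ((\<tau>^^k) B - B))"
    by (intro mult_left_mono N_sum) auto
  also have "\<dots> \<le> (1 / real n) * (\<Sum>k<n. real n * N (\<tau> B - B))"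
    by (intro mult_left_mono sum_mono order_trans[OF N_taup_diff] mult_right_mono)
       (auto simp: N_nonneg)
  also have "\<dots> = real n * N (\<tau> B - B)" using n by simp
  finally show ?thesis .
qed


lemma part2:
  assumes tot: "phi_total sm st \<phi> T" and cT: "\<forall>A\<in>T. conv A"
  shows "ergodic sm st \<phi> \<tau>"
  unfolding ergodic_def
proof (intro allI impI)
  fix An :: "nat \<Rightarrow> 'a"
  assume h1: "(\<lambda>n. N (\<tau> (An n) - An n)) \<longlonglongrightarrow> 0"
    and h2: "\<forall>\<epsilon>>0. \<exists>K. \<forall>m>K. \<forall>n>K. N (An m - An n) \<le> \<epsilon>"
  have call: "conv A" for A using conv_all tot cT by blast
  define a where "a n = \<phi> (An n)" for n
  have "Cauchy a"
  proof (rule CauchyI)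
    fix e :: real assume e: "0 < e"
    then obtain K where K: "\<forall>m>K. \<forall>n>K. N (An m - An n) \<le> e/2"
      using h2 half_gt_zero by blast
    show "\<exists>M. \<forall>m\<ge>M. \<forall>n\<ge>M. norm (a m - a n) < e"
    proof (intro exI allI impI)
      fix m n assume "Suc K \<le> m" "Suc K \<le> n"
      then have "N (An m - An n) \<le> e/2" using K by auto
      moreover have "norm (a m - a n) \<le> N (An m - An n)"
        using cmod_phi[of "An m - An n"] by (simp add: a_def phi_diff)
      ultimately show "norm (a m - a n) < e" using e by linarith
    qed
  qed
  then have alim: "a \<longlonglongrightarrow> lim a" using Cauchy_convergent_iff convergent_LIMSEQ_iff by blast
  define \<alpha> where "\<alpha> = lim a"
  have step1: "\<exists>K. \<forall>m>K. N (An m - sm (a m) 1) \<le> 3 * \<epsilon>" if ep: "\<epsilon> > 0" for \<epsilon>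
  proof -
    obtain K where K: "\<forall>m>K. \<forall>n>K. N (An m - An n) \<le> \<epsilon>" using h2 ep by blast
    show ?thesis
    proof (intro exI allI impI)
      fix m assume mK: "m > K"
      show "N (An m - sm (a m) 1) \<le> 3 * \<epsilon>"
      proof (rule field_le_epsilon)
        fix e :: real assume e: "e > 0"
        obtain n0 where n0: "\<forall>n\<ge>n0. N (avg_dev sm \<phi> \<tau> (An m) n) < e"
          using call[of "An m"] e unfolding conv_def lim0_iff by blast
        define n where "n = max n0 1"
        have n1: "n \<ge> 1" and nn0: "n \<ge> n0" by (simp_all add: n_def)
        have "\<epsilon> / real n > 0" using ep n1 by simp
        then obtain p0 where p0: "\<forall>p\<ge>p0. N (\<tau> (An p) - An p) < \<epsilon> / real n"
          using h1 unfolding lim0_iff[of "\<lambda>n. \<tau> (An n) - An n"] by blast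
        define p where "p = max p0 (Suc K)"
        have pK: "p > K" and pp0: "p \<ge> p0" by (simp_all add: p_def)
        have d: "M n (An m) - An m = M n (An m - An p) + (M n (An p) - An p) + (An p - An m)"
          by (simp add: M_diff)
        have "N (M n (An m) - An m) \<le> N (M n (An m - An p)) + N (M n (An p) - An p) + N (An p - An m)"
          unfolding d by (meson N_add add_mono order_refl order_trans)
        also have "\<dots> \<le> \<epsilon> + \<epsilon> + \<epsilon>"
        proof (intro add_mono)
          show "N (M n (An m - An p)) \<le> \<epsilon>" using N_M[of n "An m - An p"] K mK pK by force
          show "N (An p - An m) \<le> \<epsilon>" using K mK pK by force
          have "N (M n (An p) - An p) \<le> real n * N (\<tau> (An p) - An p)" using N_M_minus n1 by blast
          also have "\<dots> \<le> real n * (\<epsilon> / real n)"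
            using p0 pp0 n1 by (intro mult_left_mono) (auto intro: less_imp_le)
          also have "\<dots> = \<epsilon>" using n1 by simp
          finally show "N (M n (An p) - An p) \<le> \<epsilon>" .
        qed
        finally have A: "N (M n (An m) - An m) \<le> 3 * \<epsilon>" by simp
        have e2: "An m - sm (a m) 1 = (An m - M n (An m)) + avg_dev sm \<phi> \<tau> (An m) n"
          by (simp add: avg_M a_def)
        have "N (An m - sm (a m) 1) \<le> N (An m - M n (An m)) + N (avg_dev sm \<phi> \<tau> (An m) n)"
          unfolding e2 by (rule N_add)
        also have "\<dots> \<le> 3 * \<epsilon> + e"
          using A N_commute[of "An m" "M n (An m)"] n0 nn0 by (simp add: add_mono less_imp_le)
        finally show "N (An m - sm (a m) 1) \<le> 3 * \<epsilon> + e" .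
      qed
    qed
  qed
  show "\<exists>\<alpha>. (\<lambda>n. N (An n - sm \<alpha> 1)) \<longlonglongrightarrow> 0"
  proof (intro exI[of _ \<alpha>])
    show "(\<lambda>n. N (An n - sm \<alpha> 1)) \<longlonglongrightarrow> 0"
      unfolding lim0_iff[of "\<lambda>n. An n - sm \<alpha> 1"]
    proof (intro allI impI)
      fix r :: real assume r: "r > 0"
      obtain K where K: "\<forall>m>K. N (An m - sm (a m) 1) \<le> 3 * (r/8)" using step1[of "r/8"] r by auto
      obtain K2 where K2: "\<forall>n\<ge>K2. norm (a n - \<alpha>) < r/8"
        using LIMSEQ_D[OF alim, of "r/8"] r unfolding \<alpha>_def by auto
      show "\<exists>no. \<forall>n\<ge>no. N (An n - sm \<alpha> 1) < r"
      proof (intro exI allI impI)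
        fix n assume nn: "max (Suc K) K2 \<le> n"
        have e: "An n - sm \<alpha> 1 = (An n - sm (a n) 1) + sm (a n - \<alpha>) 1"
          by (simp add: scale_left_diff_distrib)
        have "N (An n - sm \<alpha> 1) \<le> N (An n - sm (a n) 1) + N (sm (a n - \<alpha>) 1)"
          unfolding e by (rule N_add)
        also have "\<dots> < 3 * (r/8) + r/8"
          using K K2 nn by (intro add_le_less_mono) (auto simp: N_sm1)
        also have "\<dots> < r" using r by simp
        finally show "N (An n - sm \<alpha> 1) < r" .
      qed
    qed
  qed
qed


definition cc where "cc x c K = (\<Sum>k<K. sm (complex_of_real (c k)) ((\<tau>^^k) x))"
definition SS where "SS x = {y. \<exists>c K. (\<forall>k. 0 \<le> c k) \<and> (\<forall>k\<ge>K. c k = 0) \<and> (\<Sum>k<K. c k) = 1 \<and> y = cc x c K}"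

lemma sum_ext0:
  fixes f :: "nat \<Rightarrow> 'b::comm_monoid_add"
  assumes "\<forall>k\<ge>K. f k = 0" and "K \<le> K'"
  shows "sum f {..<K'} = sum f {..<K}"
  using assms(2)
proof (induct K' rule: dec_induct)
  case (step n)
  then show ?case using assms(1) by simp
qed simp

lemma cc_ext: "\<forall>k\<ge>K. c k = 0 \<Longrightarrow> K \<le> K' \<Longrightarrow> cc x c K' = cc x c K"
  unfolding cc_def by (rule sum_ext0) auto

lemma half_comb: "sm (complex_of_real ((a + b) / 2)) v = sm (1/2) (sm (of_real a) v + sm (of_real b) v)"
proof -
  have "sm (1/2) (sm (of_real a) v + sm (of_real b) v) = sm (1/2 * of_real a + 1/2 * of_real b) v"
    by (simp only: scale_right_distrib scale_scale scale_left_distrib)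
  also have "1/2 * complex_of_real a + 1/2 * of_real b = complex_of_real ((a+b)/2)" by simp
  finally show ?thesis by simp
qed

lemma SS_mid: "y1 \<in> SS x \<Longrightarrow> y2 \<in> SS x \<Longrightarrow> sm (1/2) (y1 + y2) \<in> SS x"
proof -
  assume a1: "y1 \<in> SS x" and a2: "y2 \<in> SS x"
  obtain c1 K1 where c1: "\<forall>k. 0 \<le> c1 k" "\<forall>k\<ge>K1. c1 k = 0" "(\<Sum>k<K1. c1 k) = 1" "y1 = cc x c1 K1"
    using a1 unfolding SS_def by blast
  obtain c2 K2 where c2: "\<forall>k. 0 \<le> c2 k" "\<forall>k\<ge>K2. c2 k = 0" "(\<Sum>k<K2. c2 k) = 1" "y2 = cc x c2 K2"
    using a2 unfolding SS_def by blast
  define c where "c k = (c1 k + c2 k) / 2" for k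
  define K where "K = K1 + K2"
  have y1: "y1 = cc x c1 K" using cc_ext[OF c1(2), of K] c1(4) unfolding K_def by simp
  have y2: "y2 = cc x c2 K" using cc_ext[OF c2(2), of K] c2(4) unfolding K_def by simp
  have s1: "(\<Sum>k<K. c1 k) = 1" using sum_ext0[OF c1(2), of K] c1(3) unfolding K_def by simp
  have s2: "(\<Sum>k<K. c2 k) = 1" using sum_ext0[OF c2(2), of K] c2(3) unfolding K_def by simp
  have e: "sm (1/2) (y1 + y2) = cc x c K"
    unfolding y1 y2 cc_def c_def half_comb by (simp only: sum.distrib[symmetric] scale_sum_right)
  have "(\<Sum>k<K. c k) = (\<Sum>k<K. c1 k + c2 k) / 2" unfolding c_def by (rule sum_divide_distrib[symmetric])
  also have "\<dots> = 1" by (simp only: sum.distrib s1 s2) simp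
  finally have s: "(\<Sum>k<K. c k) = 1" .
  have p: "\<forall>k. 0 \<le> c k" using c1(1) c2(1) unfolding c_def by (simp add: add_nonneg_nonneg)
  have z: "\<forall>k\<ge>K. c k = 0" using c1(2) c2(2) unfolding c_def K_def by simp
  show ?thesis unfolding SS_def
    by (rule CollectI, rule exI[of _ c], rule exI[of _ K]) (intro conjI p z s e)
qed

lemma M_in_SS: "n \<ge> 1 \<Longrightarrow> M n x \<in> SS x"
proof -
  assume n: "n \<ge> 1"
  define c where "c k = (if k < n then 1 / real n else 0)" for k
  have "(\<Sum>k<n. c k) = (\<Sum>k<n. 1 / real n)" by (rule sum.cong) (simp_all add: c_def)
  also have "\<dots> = 1" using n by simp
  finally have s1: "(\<Sum>k<n. c k) = 1" .
  have "cc x c n = (\<Sum>k<n. sm (1 / of_nat n) ((\<tau>^^k) x))"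
    unfolding cc_def by (rule sum.cong) (simp_all add: c_def)
  then have s2: "M n x = cc x c n" by (simp only: M_def scale_sum_right)
  have s3: "\<forall>k. 0 \<le> c k" "\<forall>k\<ge>n. c k = 0" by (simp_all add: c_def)
  show ?thesis unfolding SS_def
    by (rule CollectI, rule exI[of _ c], rule exI[of _ n]) (intro conjI s1 s2 s3)
qed

lemma N_M_taup: "N (M n ((\<tau>^^k) x) - M n x) \<le> real k * (2 * N x / real n)"
proof (induct k)
  case 0 then show ?case by (simp add: N_zero)
next
  case (Suc k)
  have "N (M n ((\<tau>^^Suc k) x) - M n x) \<le> N (M n (\<tau> ((\<tau>^^k) x)) - M n ((\<tau>^^k) x)) + N (M n ((\<tau>^^k) x) - M n x)"
    by (simp only: funpow.simps comp_apply) (rule N_tri)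
  also have "\<dots> \<le> 2 * N x / real n + real k * (2 * N x / real n)"
  proof (rule add_mono)
    have "N (M n (\<tau> ((\<tau>^^k) x)) - M n ((\<tau>^^k) x)) \<le> 2 * N ((\<tau>^^k) x) / real n" by (rule N_M_tau_diff)
    also have "\<dots> \<le> 2 * N x / real n" using N_taup[of k x] by (simp add: divide_right_mono)
    finally show "N (M n (\<tau> ((\<tau>^^k) x)) - M n ((\<tau>^^k) x)) \<le> 2 * N x / real n" .
    show "N (M n ((\<tau>^^k) x) - M n x) \<le> real k * (2 * N x / real n)" by (rule Suc)
  qed
  also have "2 * N x / real n + real k * (2 * N x / real n) = real (Suc k) * (2 * N x / real n)"
    by (simp only: of_nat_Suc distrib_right mult_1 add.commute)
  finally show ?case .
qed

lemma N_M_SS: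
  assumes c0: "\<forall>k. 0 \<le> c k" and c1: "(\<Sum>k<K. c k) = 1"
  shows "N (M n (cc x c K) - M n x) \<le> real K * (2 * N x / real n)"
proof -
  define b where "b = 2 * N x / real n"
  have b0: "b \<ge> 0" by (simp add: b_def N_nonneg)
  have "M n x = sm (complex_of_real (\<Sum>k<K. c k)) (M n x)" using c1 by simp
  also have "\<dots> = (\<Sum>k<K. sm (complex_of_real (c k)) (M n x))" by (simp add: scale_sum_left)
  finally have mx: "M n x = (\<Sum>k<K. sm (complex_of_real (c k)) (M n x))" .
  have "M n (cc x c K) - M n x = (\<Sum>k<K. sm (complex_of_real (c k)) (M n ((\<tau>^^k) x) - M n x))"
    unfolding cc_def M_sum M_sm
    by (subst mx) (simp only: sum_subtractf scale_right_diff_distrib)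
  then have "N (M n (cc x c K) - M n x) \<le> (\<Sum>k<K. N (sm (complex_of_real (c k)) (M n ((\<tau>^^k) x) - M n x)))"
    using N_sum by simp
  also have "\<dots> = (\<Sum>k<K. c k * N (M n ((\<tau>^^k) x) - M n x))"
    using c0 by (simp add: N_sm)
  also have "\<dots> \<le> (\<Sum>k<K. c k * (real K * b))"
  proof (intro sum_mono mult_left_mono)
    fix k assume "k \<in> {..<K}"
    then have "real k * b \<le> real K * b" using b0 by (intro mult_right_mono) auto
    then show "N (M n ((\<tau>^^k) x) - M n x) \<le> real K * b" using N_M_taup[of n k x] b_def by simp
  qed (simp add: c0)
  also have "\<dots> = real K * b" using c1 by (simp add: sum_distrib_right[symmetric])
  finally show ?thesis by (simp add: b_def)
qed

definition L2 where "L2 x = Inf (nsq ` SS x)"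

lemma SS_ne: "SS x \<noteq> {}" using M_in_SS[of 1 x] by auto

lemma L2_le: "y \<in> SS x \<Longrightarrow> L2 x \<le> nsq y"
  unfolding L2_def by (rule cInf_lower) (auto simp: bdd_below_def intro!: exI[of _ 0] nsq_nonneg)

lemma L2_approx: "e > 0 \<Longrightarrow> \<exists>y\<in>SS x. nsq y < L2 x + e"
  using cInf_lessD[of "nsq ` SS x" "L2 x + e"] SS_ne unfolding L2_def by auto

lemma para:
  assumes "y1 \<in> SS x" "y2 \<in> SS x" "nsq y1 \<le> L2 x + e" "nsq y2 \<le> L2 x + e"
  shows "nsq (y1 - y2) \<le> 4 * e"
proof -
  have p: "nsq (y1 - y2) + nsq (y1 + y2) = 2 * nsq y1 + 2 * nsq y2"
    by (simp add: nsq_add nsq_diff)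
  have "nsq (sm (1/2) (y1 + y2)) = 1/4 * nsq (y1 + y2)"
    by (simp add: nsq_sm norm_divide power2_eq_square)
  moreover have "L2 x \<le> nsq (sm (1/2) (y1 + y2))" using SS_mid assms(1,2) L2_le by blast
  ultimately show ?thesis using p assms(3,4) by linarith
qed

lemma near_min: "e > 0 \<Longrightarrow> \<exists>n0. \<forall>n\<ge>n0. nsq (M n x) \<le> L2 x + e"
proof -
  assume e: "e > 0"
  obtain y where y: "y \<in> SS x" "nsq y < L2 x + e" using L2_approx[OF e] by blast
  then obtain c K where c: "\<forall>k. 0 \<le> c k" "(\<Sum>k<K. c k) = 1" "y = cc x c K"
    unfolding SS_def by blast
  have Le: "L2 x + e > 0" using y(2) nsq_nonneg[of y] by linarith
  have Ny: "N y < sqrt (L2 x + e)" using y(2) by (simp add: N_def)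
  define s where "s = sqrt (L2 x + e) - N y"
  have s: "s > 0" using Ny by (simp add: s_def)
  obtain n0 where n0: "real K * (2 * N x) / s < real n0" using reals_Archimedean2 by blast
  show ?thesis
  proof (intro exI allI impI)
    fix n assume nn: "max n0 1 \<le> n"
    then have npos: "real n > 0" by simp
    have a1: "real K * (2 * N x) < real n0 * s" using n0 s by (simp add: pos_divide_less_eq)
    have a2: "real n0 * s \<le> real n * s" using nn s by (intro mult_right_mono) auto
    have a3: "real K * (2 * N x / real n) = (real K * (2 * N x)) / real n" by simp
    have lt: "real K * (2 * N x / real n) < s"
      unfolding a3 using a1 a2 npos by (simp add: pos_divide_less_eq mult.commute)
    have e1: "M n x = M n y + (M n x - M n y)" by simp
    have "N (M n x) \<le> N (M n y) + N (M n x - M n y)"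
      by (subst e1) (rule N_add)
    also have "\<dots> \<le> N y + real K * (2 * N x / real n)"
    proof (rule add_mono)
      show "N (M n y) \<le> N y" by (rule N_M)
      have "N (M n (cc x c K) - M n x) \<le> real K * (2 * N x / real n)" by (rule N_M_SS[OF c(1,2)])
      then show "N (M n x - M n y) \<le> real K * (2 * N x / real n)"
        using N_commute[of "M n x" "M n y"] c(3) by simp
    qed
    also have "\<dots> < sqrt (L2 x + e)" using lt unfolding s_def by linarith
    finally have f: "N (M n x) < sqrt (L2 x + e)" .
    have "(N (M n x))^2 < (sqrt (L2 x + e))^2"
      by (rule power_strict_mono[OF f N_nonneg]) simp
    also have "\<dots> = L2 x + e" using Le by simp
    finally show "nsq (M n x) \<le> L2 x + e" by (simp add: N_sq)
  qed
qed

lemma cauchy_M: "\<epsilon> > 0 \<Longrightarrow> \<exists>K. \<forall>m>K. \<forall>n>K. N (M m x - M n x) \<le> \<epsilon>"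
proof -
  assume ep: "\<epsilon> > 0"
  obtain n0 where n0: "\<forall>n\<ge>n0. nsq (M n x) \<le> L2 x + \<epsilon>^2/4"
    using near_min[of "\<epsilon>^2/4" x] ep by auto
  show ?thesis
  proof (intro exI allI impI)
    fix m n assume m: "m > max n0 1" and n: "n > max n0 1"
    have m1: "m \<ge> 1" "m \<ge> n0" using m by auto
    have n1: "n \<ge> 1" "n \<ge> n0" using n by auto
    have "nsq (M m x - M n x) \<le> 4 * (\<epsilon>^2/4)"
    proof (rule para[where x=x])
      show "M m x \<in> SS x" using m1(1) by (rule M_in_SS)
      show "M n x \<in> SS x" using n1(1) by (rule M_in_SS)
      show "nsq (M m x) \<le> L2 x + \<epsilon>^2/4" using n0 m1 by blast
      show "nsq (M n x) \<le> L2 x + \<epsilon>^2/4" using n0 n1 by blast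
    qed
    then have "(N (M m x - M n x))^2 \<le> \<epsilon>^2" by (simp add: N_sq)
    then show "N (M m x - M n x) \<le> \<epsilon>" by (rule power2_le_imp_le) (simp add: less_imp_le ep)
  qed
qed

lemma squeeze: "(\<And>n. 0 \<le> f n) \<Longrightarrow> (\<And>n. f n \<le> g n) \<Longrightarrow> g \<longlonglongrightarrow> (0::real) \<Longrightarrow> f \<longlonglongrightarrow> 0"
  by (rule tendsto_sandwich[of "\<lambda>_. 0" f sequentially g 0]) auto

lemma part1:
  assumes erg: "ergodic sm st \<phi> \<tau>"
  shows "conv x"
proof -
  have h1: "(\<lambda>n. N (\<tau> (M n x) - M n x)) \<longlonglongrightarrow> 0"
  proof (rule squeeze)
    show "N (\<tau> (M n x) - M n x) \<le> 2 * N x / real n" for n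
      using N_M_tau_diff[of n x] by (simp add: M_tau)
    show "(\<lambda>n. 2 * N x / real n) \<longlonglongrightarrow> 0" by (rule lim_const_over_n)
  qed (rule N_nonneg)
  have h2: "\<forall>\<epsilon>>0. \<exists>K. \<forall>m>K. \<forall>n>K. N (M m x - M n x) \<le> \<epsilon>" using cauchy_M by blast
  have "\<exists>\<alpha>. (\<lambda>n. N (M n x - sm \<alpha> 1)) \<longlonglongrightarrow> 0"
    using erg[unfolded ergodic_def, rule_format, of "\<lambda>n. M n x", OF h1 h2[rule_format]] .
  then obtain \<alpha> where al: "(\<lambda>n. N (M n x - sm \<alpha> 1)) \<longlonglongrightarrow> 0" by blast
  have phi_eq: "\<alpha> = \<phi> x"
  proof (rule ccontr)
    assume ne: "\<alpha> \<noteq> \<phi> x"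
    then have pos: "cmod (\<phi> x - \<alpha>) > 0" by simp
    obtain no where no: "\<forall>n\<ge>no. N (M n x - sm \<alpha> 1) < cmod (\<phi> x - \<alpha>)"
      using al pos unfolding lim0_iff[of "\<lambda>n. M n x - sm \<alpha> 1"] by blast
    define n where "n = max no 1"
    have "\<phi> (M n x - sm \<alpha> 1) = \<phi> x - \<alpha>" by (simp add: n_def phi_diff phi_M phi_sm phi_one)
    then have "cmod (\<phi> x - \<alpha>) \<le> N (M n x - sm \<alpha> 1)" using cmod_phi by metis
    moreover have "N (M n x - sm \<alpha> 1) < cmod (\<phi> x - \<alpha>)" using no n_def by simp
    ultimately show False by linarith
  qed
  show ?thesis using al unfolding conv_def avg_M phi_eq .
qed

end

theorem proposition4p5:
  fixes sm :: "complex \<Rightarrow> 'a::ring_1 \<Rightarrow> 'a" and st :: "'a \<Rightarrow> 'a"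
    and \<phi> :: "'a \<Rightarrow> complex" and \<tau> :: "'a \<Rightarrow> 'a" and T :: "'a set"
  assumes "star_dynamical_system sm st \<phi> \<tau>"
    and "phi_total sm st \<phi> T"
  shows "(ergodic sm st \<phi> \<tau> \<longrightarrow>
            (\<forall>A. (\<lambda>n. phi_norm st \<phi> (avg_dev sm \<phi> \<tau> A n)) \<longlonglongrightarrow> 0))
       \<and> ((\<forall>A\<in>T. (\<lambda>n. phi_norm st \<phi> (avg_dev sm \<phi> \<tau> A n)) \<longlonglongrightarrow> 0) \<longrightarrow>
            ergodic sm st \<phi> \<tau>)"
proof -
  interpret sds sm st \<phi> \<tau> using assms(1) by unfold_locales
  show ?thesis
    using part1 part2[OF assms(2)] unfolding conv_def by blast
qed

end
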